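(* For every kernel configuration $C$, the theory $T_\theta^C$ is inductive, i.e. the union of any chain of models of $T_\theta^C$ (under substructure) is a model of $T_\theta^C$.
   Context: Setting: $L$ is a first-order language, $T$ a model-complete $L$-theory and $K$ a field. There are $L$-formulas without parameters which define, in every model $\mathcal M\models T$, a nontrivial $K$-vector space $\mathbb V=\mathbb V^{\mathcal M}$; elements of $\mathbb V$ are treated as single elements. $L_\theta=L\cup\{\theta\}$, $\theta$ a new unary function symbol; $T_\theta$ is $T$ plus axioms saying $\theta|_{\mathbb V}$ is a $K$-linear endomorphism of $\mathbb V$ and $\theta(x)=0$ for $x\notin\mathbb V$. For $\rho=\sum_i(\rho)_iX^i\in K[X]$, $\rho[\theta]:=\sum_i(\rho)_i\theta^i$, $\mathrm{Ker}(\rho)=\{v\in\mathbb V:\rho[\theta](v)=0\}$. $K[X]_{\mathrm{irr}}$ is the set of monic irreducible polynomials. A kernel configuration is a pair $C=(c,d)$ with $c:K[X]_{\mathrm{irr}}\to\mathbb N\cup\{\infty\}$, $d\in\mathbb N_{>0}\cup\{\infty\}$ such that $d=\infty$ or $d=\sum_f\deg(f)c(f)$; write $C(f)=c(f)$. $C$ is algebraic if $d<\infty$, with $\mathrm{MiPo}(C)=\prod_ff^{C(f)}$, and transcendental otherwise. $\theta$ is a $C$-endomorphism if $\mathrm{Ker}(\mathrm{MiPo}(C))=\mathbb V$ (algebraic case), resp. $\mathrm{Ker}(f^{C(f)})=\mathrm{Ker}(f^{C(f)+1})$ for all $f$ with $C(f)<\infty$ (transcendental case). $T^C_\theta:=T_\theta\cup\{\theta|_{\mathbb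 V}\text{ is a }C\text{-endomorphism}\}$. *)

theory Defs
  imports "HOL-Computational_Algebra.Polynomial" "HOL-Computational_Algebra.Factorial_Ring"
          "HOL-Library.Extended_Nat"
begin

text \<open>A first-order language L is given by a type of function symbols 'f with arities
  fa :: 'f => nat (constants have arity 0) and a type of relation symbols 'r with arities
  ra :: 'r => nat.\<close>

datatype 'f trm = Var nat | Fn 'f "'f trm list"

datatype ('f, 'r) fm =
    Eq "'f trm" "'f trm"
  | Rl 'r "'f trm list"
  | Neg "('f, 'r) fm"
  | Conj "('f, 'r) fm" "('f, 'r) fm"
  | Ex nat "('f, 'r) fm"

fun wf_trm :: "('f \<Rightarrow> nat) \<Rightarrow> 'f trm \<Rightarrow> bool" where
  "wf_trm fa (Var n) = True"
| "wf_trm fa (Fn f ts) = (length ts = fa f \<and> (\<forall>t\<in>set ts. wf_trm fa t))"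

fun wf_fm :: "('f \<Rightarrow> nat) \<Rightarrow> ('r \<Rightarrow> nat) \<Rightarrow> ('f, 'r) fm \<Rightarrow> bool" where
  "wf_fm fa ra (Eq s t) = (wf_trm fa s \<and> wf_trm fa t)"
| "wf_fm fa ra (Rl r ts) = (length ts = ra r \<and> (\<forall>t\<in>set ts. wf_trm fa t))"
| "wf_fm fa ra (Neg p) = wf_fm fa ra p"
| "wf_fm fa ra (Conj p q) = (wf_fm fa ra p \<and> wf_fm fa ra q)"
| "wf_fm fa ra (Ex n p) = wf_fm fa ra p"

fun fv_trm :: "'f trm \<Rightarrow> nat set" where
  "fv_trm (Var n) = {n}"
| "fv_trm (Fn f ts) = (\<Union>t\<in>set ts. fv_trm t)"

fun fv :: "('f, 'r) fm \<Rightarrow> nat set" where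
  "fv (Eq s t) = fv_trm s \<union> fv_trm t"
| "fv (Rl r ts) = (\<Union>t\<in>set ts. fv_trm t)"
| "fv (Neg p) = fv p"
| "fv (Conj p q) = fv p \<union> fv q"
| "fv (Ex n p) = fv p - {n}"

record ('f, 'r, 'a) struc =
  univ :: "'a set"
  fi :: "'f \<Rightarrow> 'a list \<Rightarrow> 'a"
  ri :: "'r \<Rightarrow> 'a list \<Rightarrow> bool"

definition is_struc :: "('f \<Rightarrow> nat) \<Rightarrow> ('f, 'r, 'a) struc \<Rightarrow> bool" where
  "is_struc fa M \<longleftrightarrow> univ M \<noteq> {} \<and>
     (\<forall>f as. length as = fa f \<and> set as \<subseteq> univ M \<longrightarrow> fi M f as \<in> univ M)"

fun eval :: "('f, 'r, 'a) struc \<Rightarrow> (nat \<Rightarrow> 'a) \<Rightarrow> 'f trm \<Rightarrow> 'a" where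
  "eval M e (Var n) = e n"
| "eval M e (Fn f ts) = fi M f (map (eval M e) ts)"

fun sat :: "('f, 'r, 'a) struc \<Rightarrow> (nat \<Rightarrow> 'a) \<Rightarrow> ('f, 'r) fm \<Rightarrow> bool" where
  "sat M e (Eq s t) = (eval M e s = eval M e t)"
| "sat M e (Rl r ts) = ri M r (map (eval M e) ts)"
| "sat M e (Neg p) = (\<not> sat M e p)"
| "sat M e (Conj p q) = (sat M e p \<and> sat M e q)"
| "sat M e (Ex n p) = (\<exists>a\<in>univ M. sat M (e(n := a)) p)"

definition sentence :: "('f \<Rightarrow> nat) \<Rightarrow> ('r \<Rightarrow> nat) \<Rightarrow> ('f, 'r) fm \<Rightarrow> bool" where
  "sentence fa ra p \<longleftrightarrow> wf_fm fa ra p \<and> fv p = {}"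

definition is_theory :: "('f \<Rightarrow> nat) \<Rightarrow> ('r \<Rightarrow> nat) \<Rightarrow> ('f, 'r) fm set \<Rightarrow> bool" where
  "is_theory fa ra T \<longleftrightarrow> (\<forall>p\<in>T. sentence fa ra p)"

definition is_model :: "('f \<Rightarrow> nat) \<Rightarrow> ('r \<Rightarrow> nat) \<Rightarrow> ('f, 'r) fm set \<Rightarrow> ('f, 'r, 'a) struc \<Rightarrow> bool" where
  "is_model fa ra T M \<longleftrightarrow> is_struc fa M \<and>
     (\<forall>p\<in>T. \<forall>e. range e \<subseteq> univ M \<longrightarrow> sat M e p)"

definition substr :: "('f \<Rightarrow> nat) \<Rightarrow> ('r \<Rightarrow> nat) \<Rightarrow> ('f, 'r, 'a) struc \<Rightarrow> ('f, 'r, 'a) struc \<Rightarrow> bool" where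
  "substr fa ra M N \<longleftrightarrow> is_struc fa M \<and> is_struc fa N \<and> univ M \<subseteq> univ N \<and>
     (\<forall>f as. length as = fa f \<and> set as \<subseteq> univ M \<longrightarrow> fi M f as = fi N f as) \<and>
     (\<forall>r as. length as = ra r \<and> set as \<subseteq> univ M \<longrightarrow> (ri M r as \<longleftrightarrow> ri N r as))"

definition elem_substr :: "('f \<Rightarrow> nat) \<Rightarrow> ('r \<Rightarrow> nat) \<Rightarrow> ('f, 'r, 'a) struc \<Rightarrow> ('f, 'r, 'a) struc \<Rightarrow> bool" where
  "elem_substr fa ra M N \<longleftrightarrow> substr fa ra M N \<and>
     (\<forall>p e. wf_fm fa ra p \<and> range e \<subseteq> univ M \<longrightarrow> (sat M e p \<longleftrightarrow> sat N e p))"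

text \<open>Model completeness: every substructure inclusion between models of T is elementary
  (for structures whose universes live in the type 'a).\<close>
definition model_complete :: "('f \<Rightarrow> nat) \<Rightarrow> ('r \<Rightarrow> nat) \<Rightarrow> ('f, 'r) fm set \<Rightarrow> 'a itself \<Rightarrow> bool" where
  "model_complete fa ra T (_ :: 'a itself) \<longleftrightarrow>
     (\<forall>M N :: ('f, 'r, 'a) struc. is_model fa ra T M \<and> is_model fa ra T N \<and> substr fa ra M N
        \<longrightarrow> elem_substr fa ra M N)"

definition kvs :: "'a set \<Rightarrow> ('a \<Rightarrow> 'a \<Rightarrow> 'a) \<Rightarrow> ('k::field \<Rightarrow> 'a \<Rightarrow> 'a) \<Rightarrow> 'a \<Rightarrow> bool" where
  "kvs V add sm zero \<longleftrightarrow> zero \<in> V \<and>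
     (\<forall>a\<in>V. \<forall>b\<in>V. add a b \<in> V) \<and> (\<forall>k. \<forall>a\<in>V. sm k a \<in> V) \<and>
     (\<forall>a\<in>V. \<forall>b\<in>V. \<forall>c\<in>V. add (add a b) c = add a (add b c)) \<and>
     (\<forall>a\<in>V. \<forall>b\<in>V. add a b = add b a) \<and>
     (\<forall>a\<in>V. add zero a = a) \<and>
     (\<forall>a\<in>V. \<exists>b\<in>V. add a b = zero) \<and>
     (\<forall>k. \<forall>a\<in>V. \<forall>b\<in>V. sm k (add a b) = add (sm k a) (sm k b)) \<and>
     (\<forall>k l. \<forall>a\<in>V. sm (k + l) a = add (sm k a) (sm l a)) \<and>
     (\<forall>k l. \<forall>a\<in>V. sm (k * l) a = sm k (sm l a)) \<and>
     (\<forall>a\<in>V. sm 1 a = a)"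

definition env3 :: "'a \<Rightarrow> 'a \<Rightarrow> 'a \<Rightarrow> nat \<Rightarrow> 'a" where
  "env3 a b c n = (if n = 0 then a else if n = 1 then b else c)"

text \<open>Parameter-free formulas: phiV(x0) defines V, phiAdd(x0,x1,x2) the graph of addition
  (x0 + x1 = x2), phiSm k (x0,x1) the graph of scalar multiplication by k (k x0 = x1).\<close>
definition vs_formulas :: "('f \<Rightarrow> nat) \<Rightarrow> ('r \<Rightarrow> nat) \<Rightarrow> ('f, 'r) fm \<Rightarrow> ('f, 'r) fm \<Rightarrow> ('k \<Rightarrow> ('f, 'r) fm) \<Rightarrow> bool" where
  "vs_formulas fa ra phiV phiAdd phiSm \<longleftrightarrow>
     wf_fm fa ra phiV \<and> fv phiV \<subseteq> {0} \<and>
     wf_fm fa ra phiAdd \<and> fv phiAdd \<subseteq> {0, 1, 2} \<and>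
     (\<forall>k. wf_fm fa ra (phiSm k) \<and> fv (phiSm k) \<subseteq> {0, 1})"

definition vset :: "('f, 'r, 'a) struc \<Rightarrow> ('f, 'r) fm \<Rightarrow> 'a set" where
  "vset M phiV = {a \<in> univ M. sat M (\<lambda>_. a) phiV}"

definition defines_vs :: "('f, 'r, 'a) struc \<Rightarrow> ('f, 'r) fm \<Rightarrow> ('f, 'r) fm \<Rightarrow> ('k::field \<Rightarrow> ('f, 'r) fm)
     \<Rightarrow> ('a \<Rightarrow> 'a \<Rightarrow> 'a) \<Rightarrow> ('k \<Rightarrow> 'a \<Rightarrow> 'a) \<Rightarrow> 'a \<Rightarrow> bool" where
  "defines_vs M phiV phiAdd phiSm add sm zero \<longleftrightarrow>
     (let V = vset M phiV in
       (\<forall>a\<in>V. \<forall>b\<in>V. \<forall>c\<in>univ M. sat M (env3 a b c) phiAdd \<longleftrightarrow> c = add a b) \<and>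
       (\<forall>k. \<forall>a\<in>V. \<forall>b\<in>univ M. sat M (env3 a b b) (phiSm k) \<longleftrightarrow> b = sm k a) \<and>
       kvs V add sm zero \<and> V \<noteq> {zero})"

definition monic_irr :: "'k::field poly \<Rightarrow> bool" where
  "monic_irr f \<longleftrightarrow> lead_coeff f = 1 \<and> irreducible f"

definition polyop :: "('a \<Rightarrow> 'a \<Rightarrow> 'a) \<Rightarrow> ('k::field \<Rightarrow> 'a \<Rightarrow> 'a) \<Rightarrow> 'a \<Rightarrow> ('a \<Rightarrow> 'a) \<Rightarrow> 'k poly \<Rightarrow> 'a \<Rightarrow> 'a" where
  "polyop add sm zero th rho v =
     foldr (\<lambda>i acc. add (sm (coeff rho i) ((th ^^ i) v)) acc) [0..<Suc (degree rho)] zero"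

definition Ker :: "'a set \<Rightarrow> ('a \<Rightarrow> 'a \<Rightarrow> 'a) \<Rightarrow> ('k::field \<Rightarrow> 'a \<Rightarrow> 'a) \<Rightarrow> 'a \<Rightarrow> ('a \<Rightarrow> 'a) \<Rightarrow> 'k poly \<Rightarrow> 'a set" where
  "Ker V add sm zero th rho = {v \<in> V. polyop add sm zero th rho v = zero}"

definition csupp :: "('k::field poly \<Rightarrow> enat) \<Rightarrow> 'k poly set" where
  "csupp c = {f. monic_irr f \<and> c f \<noteq> 0}"

text \<open>Kernel configuration C = (c, d); only the values of c on monic irreducibles matter.\<close>
definition kconf :: "('k::field poly \<Rightarrow> enat) \<Rightarrow> enat \<Rightarrow> bool" where
  "kconf c d \<longleftrightarrow> d > 0 \<and>
     (d = \<infinity> \<or> (finite (csupp c) \<and> d = (\<Sum>f\<in>csupp c. of_nat (degree f) * c f)))"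

definition MiPo :: "('k::field poly \<Rightarrow> enat) \<Rightarrow> 'k poly" where
  "MiPo c = (\<Prod>f\<in>csupp c. f ^ the_enat (c f))"

definition C_endo :: "('k::field poly \<Rightarrow> enat) \<Rightarrow> enat \<Rightarrow> 'a set \<Rightarrow> ('a \<Rightarrow> 'a \<Rightarrow> 'a) \<Rightarrow> ('k \<Rightarrow> 'a \<Rightarrow> 'a) \<Rightarrow> 'a
     \<Rightarrow> ('a \<Rightarrow> 'a) \<Rightarrow> bool" where
  "C_endo c d V add sm zero th \<longleftrightarrow>
     (if d \<noteq> \<infinity> then Ker V add sm zero th (MiPo c) = V
      else (\<forall>f. monic_irr f \<and> c f \<noteq> \<infinity> \<longrightarrow>
              Ker V add sm zero th (f ^ the_enat (c f)) = Ker V add sm zero th (f ^ (the_enat (c f) + 1))))"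

text \<open>An L_theta-structure is an L-structure M together with the interpretation th of theta.\<close>
definition is_struc_th :: "('f \<Rightarrow> nat) \<Rightarrow> ('f, 'r, 'a) struc \<Rightarrow> ('a \<Rightarrow> 'a) \<Rightarrow> bool" where
  "is_struc_th fa M th \<longleftrightarrow> is_struc fa M \<and> (\<forall>x\<in>univ M. th x \<in> univ M)"

definition substr_th :: "('f \<Rightarrow> nat) \<Rightarrow> ('r \<Rightarrow> nat) \<Rightarrow> ('f, 'r, 'a) struc \<Rightarrow> ('a \<Rightarrow> 'a)
     \<Rightarrow> ('f, 'r, 'a) struc \<Rightarrow> ('a \<Rightarrow> 'a) \<Rightarrow> bool" where
  "substr_th fa ra M th N th' \<longleftrightarrow> substr fa ra M N \<and> is_struc_th fa M th \<and> is_struc_th fa N th' \<and>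
     (\<forall>x\<in>univ M. th x = th' x)"

definition model_TC :: "('f \<Rightarrow> nat) \<Rightarrow> ('r \<Rightarrow> nat) \<Rightarrow> ('f, 'r) fm set \<Rightarrow> ('f, 'r) fm \<Rightarrow> ('f, 'r) fm
     \<Rightarrow> ('k::field \<Rightarrow> ('f, 'r) fm) \<Rightarrow> ('k poly \<Rightarrow> enat) \<Rightarrow> enat \<Rightarrow> ('f, 'r, 'a) struc \<Rightarrow> ('a \<Rightarrow> 'a) \<Rightarrow> bool" where
  "model_TC fa ra T phiV phiAdd phiSm c d M th \<longleftrightarrow>
     is_model fa ra T M \<and> is_struc_th fa M th \<and>
     (\<exists>add sm zero. defines_vs M phiV phiAdd phiSm add sm zero \<and>
        (let V = vset M phiV in
          (\<forall>v\<in>V. th v \<in> V) \<and>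
          (\<forall>a\<in>V. \<forall>b\<in>V. th (add a b) = add (th a) (th b)) \<and>
          (\<forall>k. \<forall>a\<in>V. th (sm k a) = sm k (th a)) \<and>
          (\<forall>x\<in>univ M - V. th x = zero) \<and>
          C_endo c d V add sm zero th))"

end

theory Submission imports Defs begin

lemma eval_sub:
  assumes "substr fa ra A B" "range e \<subseteq> univ A"
  shows "wf_trm fa t \<Longrightarrow> eval A e t = eval B e t \<and> eval A e t \<in> univ A"
proof (induction t)
  case (Var n) then show ?case using assms by auto
next
  case (Fn f ts)
  have w: "\<forall>t\<in>set ts. wf_trm fa t" using Fn.prems by simp
  have h: "\<forall>t\<in>set ts. eval A e t = eval B e t \<and> eval A e t \<in> univ A" using Fn.IH w by blast
  then have m: "map (eval A e) ts = map (eval B e) ts" by auto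
  have s: "set (map (eval A e) ts) \<subseteq> univ A" using h by auto
  have l: "length (map (eval A e) ts) = fa f" using Fn by auto
  have 1: "fi A f (map (eval A e) ts) \<in> univ A" using assms(1) s l unfolding substr_def is_struc_def by blast
  have 2: "fi A f (map (eval A e) ts) = fi B f (map (eval B e) ts)"
    using assms(1) s l m unfolding substr_def by metis
  show ?case using 1 2 by (simp only: eval.simps)
qed

lemma eval_agree: "(\<forall>x\<in>fv_trm t. e x = e' x) \<Longrightarrow> eval M e t = eval M e' t"
  by (induction t) (auto intro!: arg_cong[where f="fi M _"])

lemma sat_agree: "(\<forall>x\<in>fv p. e x = e' x) \<Longrightarrow> sat M e p = sat M e' p"
proof (induction p arbitrary: e e')
  case (Eq s t) then show ?case using eval_agree[of s e e' M] eval_agree[of t e e' M] by auto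
next
  case (Rl r ts)
  have "map (eval M e) ts = map (eval M e') ts" using Rl eval_agree[of _ e e' M] by auto
  then show ?case by (simp only: sat.simps)
next
  case (Conj p q)
  have "sat M e p = sat M e' p" using Conj.IH(1) Conj.prems by simp
  moreover have "sat M e q = sat M e' q" using Conj.IH(2) Conj.prems by simp
  ultimately show ?case by simp
next
  case (Ex n p)
  have "\<And>a. sat M (e(n:=a)) p = sat M (e'(n:=a)) p" using Ex.IH Ex.prems by auto
  then show ?case by simp
qed auto

lemma chain_elem:
  fixes Ms :: "'i \<Rightarrow> ('f, 'r, 'a) struc"
  assumes mc: "model_complete fa ra T TYPE('a)"
    and ch: "\<forall>i\<in>I. \<forall>j\<in>I. substr fa ra (Ms i) (Ms j) \<or> substr fa ra (Ms j) (Ms i)"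
    and mods: "\<forall>i\<in>I. is_model fa ra T (Ms i)"
    and U: "univ M = (\<Union>i\<in>I. univ (Ms i))"
    and sub: "\<forall>i\<in>I. substr fa ra (Ms i) M"
  shows "wf_fm fa ra p \<Longrightarrow> \<forall>i\<in>I. \<forall>e. range e \<subseteq> univ (Ms i) \<longrightarrow> (sat (Ms i) e p \<longleftrightarrow> sat M e p)"
proof (induction p)
  case (Eq s t)
  show ?case
  proof (intro ballI allI impI)
    fix i and e :: "nat \<Rightarrow> 'a" assume i: "i \<in> I" and e: "range e \<subseteq> univ (Ms i)"
    have s: "substr fa ra (Ms i) M" using sub i by auto
    show "sat (Ms i) e (Eq s t) = sat M e (Eq s t)"
      using eval_sub[OF s e, of s] eval_sub[OF s e, of t] Eq by auto
  qed
next
  case (Rl r ts)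
  show ?case
  proof (intro ballI allI impI)
    fix i and e :: "nat \<Rightarrow> 'a" assume i: "i \<in> I" and e: "range e \<subseteq> univ (Ms i)"
    have s: "substr fa ra (Ms i) M" using sub i by auto
    have h: "\<forall>t\<in>set ts. eval (Ms i) e t = eval M e t \<and> eval (Ms i) e t \<in> univ (Ms i)"
      using eval_sub[OF s e] Rl.prems by (simp only: wf_fm.simps) blast
    then have m: "map (eval (Ms i) e) ts = map (eval M e) ts" by auto
    have ss: "set (map (eval (Ms i) e) ts) \<subseteq> univ (Ms i)" using h by auto
    have l: "length (map (eval (Ms i) e) ts) = ra r" using Rl by auto
    have "ri (Ms i) r (map (eval (Ms i) e) ts) = ri M r (map (eval (Ms i) e) ts)"
      using s ss l unfolding substr_def by blast
    then show "sat (Ms i) e (Rl r ts) = sat M e (Rl r ts)"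
      using m by (simp only: sat.simps)
  qed
next
  case (Ex n p)
  show ?case
  proof (intro ballI allI impI)
    fix i and e :: "nat \<Rightarrow> 'a" assume i: "i \<in> I" and e: "range e \<subseteq> univ (Ms i)"
    have IH: "\<forall>i\<in>I. \<forall>e. range e \<subseteq> univ (Ms i) \<longrightarrow> (sat (Ms i) e p \<longleftrightarrow> sat M e p)"
      using Ex by auto
    have s: "substr fa ra (Ms i) M" using sub i by auto
    show "sat (Ms i) e (Ex n p) = sat M e (Ex n p)"
    proof
      assume "sat (Ms i) e (Ex n p)"
      then obtain a where a: "a \<in> univ (Ms i)" "sat (Ms i) (e(n:=a)) p" by auto
      have r: "range (e(n:=a)) \<subseteq> univ (Ms i)" using a e by auto
      have "sat M (e(n:=a)) p" using IH i r a by blast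
      moreover have "a \<in> univ M" using a s unfolding substr_def by auto
      ultimately show "sat M e (Ex n p)" by auto
    next
      assume "sat M e (Ex n p)"
      then obtain a where a: "a \<in> univ M" "sat M (e(n:=a)) p" by auto
      then obtain j where j: "j \<in> I" "a \<in> univ (Ms j)" using U by auto
      have "\<exists>k\<in>I. substr fa ra (Ms i) (Ms k) \<and> substr fa ra (Ms j) (Ms k)"
      proof (cases "substr fa ra (Ms i) (Ms j)")
        case True
        have "substr fa ra (Ms j) (Ms j)" using ch j(1) by blast
        then show ?thesis using True j(1) by blast
      next
        case False
        then have "substr fa ra (Ms j) (Ms i)" using ch i j(1) by blast
        moreover have "substr fa ra (Ms i) (Ms i)" using ch i by blast
        ultimately show ?thesis using i by blast
      qed
      then obtain k where k: "k \<in> I" "substr fa ra (Ms i) (Ms k)" "substr fa ra (Ms j) (Ms k)"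
        by blast
      have ak: "a \<in> univ (Ms k)" using k(3) j(2) unfolding substr_def by auto
      have ek: "range e \<subseteq> univ (Ms k)" using k(2) e unfolding substr_def by auto
      have r: "range (e(n:=a)) \<subseteq> univ (Ms k)" using ak ek by auto
      have "sat (Ms k) (e(n:=a)) p" using IH k(1) r a(2) by blast
      then have sk: "sat (Ms k) e (Ex n p)" using ak by auto
      have el: "elem_substr fa ra (Ms i) (Ms k)" using mc mods i k unfolding model_complete_def by blast
      show "sat (Ms i) e (Ex n p)" using el sk e Ex.prems unfolding elem_substr_def by blast
    qed
  qed
qed auto

lemma polyop_restrict:
  assumes th1: "\<forall>v\<in>V'. th' v \<in> V'" and th2: "\<forall>v\<in>V'. th v = th' v"
    and ad: "\<forall>a\<in>V'. \<forall>b\<in>V'. add a b = add' a b \<and> add' a b \<in> V'"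
    and sm: "\<forall>k. \<forall>a\<in>V'. sm k a = sm' k a \<and> sm' k a \<in> V'"
    and z: "zero = zero'" "zero' \<in> V'" and v: "v \<in> V'"
  shows "polyop add sm zero th rho v = polyop add' sm' zero' th' rho v \<and> polyop add' sm' zero' th' rho v \<in> V'"
proof -
  have it: "(th^^n) v = (th'^^n) v \<and> (th'^^n) v \<in> V'" for n
    by (induction n) (use th1 th2 v in auto)
  have "foldr (\<lambda>i acc. add (sm (coeff rho i) ((th ^^ i) v)) acc) xs zero
      = foldr (\<lambda>i acc. add' (sm' (coeff rho i) ((th' ^^ i) v)) acc) xs zero' \<and>
      foldr (\<lambda>i acc. add' (sm' (coeff rho i) ((th' ^^ i) v)) acc) xs zero' \<in> V'" for xs
  proof (induction xs)
    case Nil then show ?case using z by simp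
  next
    case (Cons x xs)
    have 1: "sm (coeff rho x) ((th ^^ x) v) = sm' (coeff rho x) ((th' ^^ x) v)"
      "sm' (coeff rho x) ((th' ^^ x) v) \<in> V'" using it[of x] sm by auto
    show ?case using Cons 1 ad by simp
  qed
  then show ?thesis unfolding polyop_def by blast
qed

lemma kvs_zero_unique:
  assumes k: "kvs V add sm zero" and z: "z \<in> V" and e: "add z z = z"
  shows "z = zero"
proof -
  have "\<forall>a\<in>V. \<exists>b\<in>V. add a b = zero" using k unfolding kvs_def by simp
  then obtain b where b: "b \<in> V" "add z b = zero" using z by blast
  have zV: "zero \<in> V" using k unfolding kvs_def by blast
  have "zero = add (add z z) b" using b e by simp
  also have "\<dots> = add z (add z b)" using k z b unfolding kvs_def by blast
  also have "\<dots> = add z zero" using b by simp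
  also have "\<dots> = add zero z" using k z zV unfolding kvs_def by blast
  also have "\<dots> = z" using k z unfolding kvs_def by blast
  finally show ?thesis by simp
qed

theorem lemma2p18:
  fixes fa :: "'f \<Rightarrow> nat" and ra :: "'r \<Rightarrow> nat" and T :: "('f, 'r) fm set"
    and phiV phiAdd :: "('f, 'r) fm" and phiSm :: "'k::field \<Rightarrow> ('f, 'r) fm"
    and c :: "'k poly \<Rightarrow> enat" and d :: enat
    and I :: "'i set" and Ms :: "'i \<Rightarrow> ('f, 'r, 'a) struc" and ths :: "'i \<Rightarrow> 'a \<Rightarrow> 'a"
    and M :: "('f, 'r, 'a) struc" and th :: "'a \<Rightarrow> 'a"
  assumes "is_theory fa ra T"
    and "model_complete fa ra T TYPE('a)"
    and "vs_formulas fa ra phiV phiAdd phiSm"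
    and "\<forall>N :: ('f, 'r, 'a) struc. is_model fa ra T N \<longrightarrow>
           (\<exists>add sm zero. defines_vs N phiV phiAdd phiSm add sm zero)"
    and "kconf c d"
    and "I \<noteq> {}"
    and "\<forall>i\<in>I. \<forall>j\<in>I. substr_th fa ra (Ms i) (ths i) (Ms j) (ths j) \<or>
                       substr_th fa ra (Ms j) (ths j) (Ms i) (ths i)"
    and "\<forall>i\<in>I. model_TC fa ra T phiV phiAdd phiSm c d (Ms i) (ths i)"
    and "univ M = (\<Union>i\<in>I. univ (Ms i))"
    and "\<forall>i\<in>I. substr_th fa ra (Ms i) (ths i) M th"
  shows "model_TC fa ra T phiV phiAdd phiSm c d M th"
proof -
  have subM: "\<forall>i\<in>I. substr fa ra (Ms i) M" using assms(10) unfolding substr_th_def by blast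
  have thM: "\<forall>i\<in>I. \<forall>x\<in>univ (Ms i). ths i x = th x" using assms(10) unfolding substr_th_def by blast
  have UM: "\<forall>i\<in>I. univ (Ms i) \<subseteq> univ M" using subM unfolding substr_def by blast
  have ch: "\<forall>i\<in>I. \<forall>j\<in>I. substr fa ra (Ms i) (Ms j) \<or> substr fa ra (Ms j) (Ms i)"
    using assms(7) unfolding substr_th_def by blast
  have mods: "\<forall>i\<in>I. is_model fa ra T (Ms i)" using assms(8) unfolding model_TC_def by blast
  note CE = chain_elem[OF assms(2) ch mods assms(9) subM]
  have two: "\<exists>k\<in>I. a \<in> univ (Ms k) \<and> b \<in> univ (Ms k)" if ab: "a \<in> univ M" "b \<in> univ M" for a b
  proof -
    obtain i j where ij: "i \<in> I" "j \<in> I" "a \<in> univ (Ms i)" "b \<in> univ (Ms j)"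
      using ab assms(9) by auto
    show ?thesis
    proof (cases "substr fa ra (Ms i) (Ms j)")
      case True then show ?thesis using ij unfolding substr_def by blast
    next
      case False
      then have "substr fa ra (Ms j) (Ms i)" using ch ij by blast
      then show ?thesis using ij unfolding substr_def by blast
    qed
  qed
  obtain i0 where i0: "i0 \<in> I" using assms(6) by blast
  have structM: "is_struc_th fa M th" using assms(10) i0 unfolding substr_th_def by blast
  have isM: "is_struc fa M" using structM unfolding is_struc_th_def by blast
  have modM: "is_model fa ra T M"
    unfolding is_model_def
  proof (intro conjI isM ballI allI impI)
    fix p and e :: "nat \<Rightarrow> 'a" assume p: "p \<in> T" and e: "range e \<subseteq> univ M"
    have sp: "wf_fm fa ra p" "fv p = {}" using assms(1) p unfolding is_theory_def sentence_def by auto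
    have "is_struc fa (Ms i0)" using mods i0 unfolding is_model_def by blast
    then obtain x0 where x0: "x0 \<in> univ (Ms i0)" unfolding is_struc_def by blast
    have "sat (Ms i0) (\<lambda>_. x0) p" using mods i0 p x0 unfolding is_model_def by auto
    then have "sat M (\<lambda>_. x0) p" using CE[OF sp(1)] i0 x0 by auto
    then show "sat M e p" using sat_agree[of p e "\<lambda>_. x0" M] sp(2) by simp
  qed
  obtain add sm zero where dM: "defines_vs M phiV phiAdd phiSm add sm zero"
    using assms(4) modM by blast
  define V where "V = vset M phiV"
  have dM': "(\<forall>a\<in>V. \<forall>b\<in>V. \<forall>c\<in>univ M. sat M (env3 a b c) phiAdd \<longleftrightarrow> c = add a b)"
      "(\<forall>k. \<forall>a\<in>V. \<forall>b\<in>univ M. sat M (env3 a b b) (phiSm k) \<longleftrightarrow> b = sm k a)"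
      "kvs V add sm zero"
    using dM unfolding defines_vs_def V_def Let_def by auto
  have VM: "V \<subseteq> univ M" unfolding V_def vset_def by auto
  have wfs: "wf_fm fa ra phiV" "wf_fm fa ra phiAdd" "\<And>k. wf_fm fa ra (phiSm k)"
    using assms(3) unfolding vs_formulas_def by auto
  define Q where "Q = (\<lambda>i a s z. defines_vs (Ms i) phiV phiAdd phiSm a s z \<and>
      kvs (vset (Ms i) phiV) a s z \<and>
      (\<forall>v\<in>vset (Ms i) phiV. ths i v \<in> vset (Ms i) phiV) \<and>
      (\<forall>x\<in>vset (Ms i) phiV. \<forall>y\<in>vset (Ms i) phiV. ths i (a x y) = a (ths i x) (ths i y)) \<and>
      (\<forall>k. \<forall>x\<in>vset (Ms i) phiV. ths i (s k x) = s k (ths i x)) \<and>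
      (\<forall>x\<in>univ (Ms i) - vset (Ms i) phiV. ths i x = z) \<and>
      C_endo c d (vset (Ms i) phiV) a s z (ths i) \<and>
      vset (Ms i) phiV = V \<inter> univ (Ms i) \<and>
      (\<forall>x\<in>vset (Ms i) phiV. \<forall>y\<in>vset (Ms i) phiV. add x y = a x y \<and> a x y \<in> vset (Ms i) phiV) \<and>
      (\<forall>k. \<forall>x\<in>vset (Ms i) phiV. sm k x = s k x \<and> s k x \<in> vset (Ms i) phiV) \<and>
      z = zero \<and> z \<in> vset (Ms i) phiV)"
  have per: "\<exists>a s z. Q i a s z"
    if i: "i \<in> I" for i
  proof -
    obtain a s z where
      dI: "defines_vs (Ms i) phiV phiAdd phiSm a s z" and
      rest: "(\<forall>v\<in>vset (Ms i) phiV. ths i v \<in> vset (Ms i) phiV) \<and>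
      (\<forall>x\<in>vset (Ms i) phiV. \<forall>y\<in>vset (Ms i) phiV. ths i (a x y) = a (ths i x) (ths i y)) \<and>
      (\<forall>k. \<forall>x\<in>vset (Ms i) phiV. ths i (s k x) = s k (ths i x)) \<and>
      (\<forall>x\<in>univ (Ms i) - vset (Ms i) phiV. ths i x = z) \<and>
      C_endo c d (vset (Ms i) phiV) a s z (ths i)"
      using assms(8) i unfolding model_TC_def Let_def by blast
    define Vi where "Vi = vset (Ms i) phiV"
    have dI': "(\<forall>x\<in>Vi. \<forall>y\<in>Vi. \<forall>c\<in>univ (Ms i). sat (Ms i) (env3 x y c) phiAdd \<longleftrightarrow> c = a x y)"
      "(\<forall>k. \<forall>x\<in>Vi. \<forall>y\<in>univ (Ms i). sat (Ms i) (env3 x y y) (phiSm k) \<longleftrightarrow> y = s k x)"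
      "kvs Vi a s z"
      using dI unfolding defines_vs_def Vi_def Let_def by auto
    have ViU: "Vi \<subseteq> univ (Ms i)" unfolding Vi_def vset_def by auto
    have eq: "Vi = V \<inter> univ (Ms i)"
    proof -
      have "sat (Ms i) (\<lambda>_. x) phiV = sat M (\<lambda>_. x) phiV" if "x \<in> univ (Ms i)" for x
        using CE[OF wfs(1)] i that by auto
      then show ?thesis unfolding Vi_def V_def vset_def using UM i by auto
    qed
    have env: "range (env3 x y w) \<subseteq> univ (Ms i)" if "x \<in> univ (Ms i)" "y \<in> univ (Ms i)" "w \<in> univ (Ms i)" for x y w
      using that unfolding env3_def by auto
    have addeq: "add x y = a x y \<and> a x y \<in> Vi" if xy: "x \<in> Vi" "y \<in> Vi" for x y
    proof -
      have aV: "a x y \<in> Vi" using dI'(3) xy by (simp add: kvs_def)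
      have "sat (Ms i) (env3 x y (a x y)) phiAdd" using dI'(1) xy aV ViU by blast
      then have "sat M (env3 x y (a x y)) phiAdd" using CE[OF wfs(2)] i env xy aV ViU by blast
      moreover have "x \<in> V" "y \<in> V" "a x y \<in> univ M" using xy aV eq UM i ViU by auto
      ultimately show ?thesis using dM'(1) aV by auto
    qed
    have smeq: "sm k x = s k x \<and> s k x \<in> Vi" if xy: "x \<in> Vi" for x k
    proof -
      have aV: "s k x \<in> Vi" using dI'(3) xy by (simp add: kvs_def)
      have "sat (Ms i) (env3 x (s k x) (s k x)) (phiSm k)" using dI'(2) xy aV ViU by blast
      then have "sat M (env3 x (s k x) (s k x)) (phiSm k)" using CE[OF wfs(3)] i env xy aV ViU by blast
      moreover have "x \<in> V" "s k x \<in> univ M" using xy aV eq UM i ViU by auto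
      ultimately show ?thesis using dM'(2) aV by auto
    qed
    have zV: "z \<in> Vi" using dI'(3) by (simp add: kvs_def)
    have "add z z = z" using addeq[OF zV zV] dI'(3) zV unfolding kvs_def by auto
    then have zeq: "z = zero" using kvs_zero_unique[OF dM'(3)] zV eq by blast
    note r = rest[unfolded Vi_def[symmetric]]
    have "Q i a s z" unfolding Q_def Vi_def[symmetric]
      apply (intro conjI)
                apply (fact dI)
               apply (fact dI'(3))
              apply (fact r[THEN conjunct1])
             apply (fact r[THEN conjunct2, THEN conjunct1])
            apply (fact r[THEN conjunct2, THEN conjunct2, THEN conjunct1])
           apply (fact r[THEN conjunct2, THEN conjunct2, THEN conjunct2, THEN conjunct1])
          apply (fact r[THEN conjunct2, THEN conjunct2, THEN conjunct2, THEN conjunct2])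
         apply (fact eq)
      using addeq apply blast
      using smeq apply blast
      using zeq zV by auto
    then show ?thesis by blast
  qed
  then obtain ADD SM ZERO where P: "\<forall>i\<in>I. Q i (ADD i) (SM i) (ZERO i)"
    by metis
  have PQ: "Q i (ADD i) (SM i) (ZERO i)" if "i \<in> I" for i using P that by blast
  note Qs = PQ[unfolded Q_def]
  have thV: "\<forall>v\<in>vset (Ms i) phiV. ths i v \<in> vset (Ms i) phiV" if "i \<in> I" for i
    using Qs[OF that] by (elim conjE) assumption
  have thadd: "\<forall>x\<in>vset (Ms i) phiV. \<forall>y\<in>vset (Ms i) phiV. ths i (ADD i x y) = ADD i (ths i x) (ths i y)" if "i \<in> I" for i
    using Qs[OF that] by (elim conjE) assumption
  have thsm: "\<forall>k. \<forall>x\<in>vset (Ms i) phiV. ths i (SM i k x) = SM i k (ths i x)" if "i \<in> I" for i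
    using Qs[OF that] by (elim conjE) assumption
  have thz: "\<forall>x\<in>univ (Ms i) - vset (Ms i) phiV. ths i x = ZERO i" if "i \<in> I" for i
    using Qs[OF that] by (elim conjE) assumption
  have CEi: "C_endo c d (vset (Ms i) phiV) (ADD i) (SM i) (ZERO i) (ths i)" if "i \<in> I" for i
    using Qs[OF that] by (elim conjE) assumption
  have eqV: "vset (Ms i) phiV = V \<inter> univ (Ms i)" if "i \<in> I" for i
    using Qs[OF that] by (elim conjE) assumption
  have addE: "\<forall>x\<in>vset (Ms i) phiV. \<forall>y\<in>vset (Ms i) phiV. add x y = ADD i x y \<and> ADD i x y \<in> vset (Ms i) phiV" if "i \<in> I" for i
    using Qs[OF that] by (elim conjE) assumption
  have smE: "\<forall>k. \<forall>x\<in>vset (Ms i) phiV. sm k x = SM i k x \<and> SM i k x \<in> vset (Ms i) phiV" if "i \<in> I" for i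
    using Qs[OF that] by (elim conjE) assumption
  have zE: "ZERO i = zero" "ZERO i \<in> vset (Ms i) phiV" if "i \<in> I" for i
    using Qs[OF that] by auto
  have ViU: "vset (Ms i) phiV \<subseteq> univ (Ms i)" for i unfolding vset_def by auto
  have thVs: "th v = ths i v" if "i \<in> I" "v \<in> vset (Ms i) phiV" for i v
  proof -
    have "v \<in> univ (Ms i)" using that(2) unfolding vset_def by simp
    then show ?thesis using thM that(1) by simp
  qed
  have inV: "\<exists>i\<in>I. v \<in> vset (Ms i) phiV" if vv: "v \<in> V" for v
  proof -
    obtain i where "i \<in> I" "v \<in> univ (Ms i)" using vv VM assms(9) by auto
    then show ?thesis using eqV vv by auto
  qed
  have G1: "\<forall>v\<in>V. th v \<in> V"
  proof
    fix v assume v: "v \<in> V"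
    then obtain i where i: "i \<in> I" "v \<in> vset (Ms i) phiV" using inV by blast
    have "th v = ths i v" using thVs i by blast
    then show "th v \<in> V" using thV[OF i(1)] i eqV[OF i(1)] by auto
  qed
  have G2: "\<forall>x\<in>V. \<forall>y\<in>V. th (add x y) = add (th x) (th y)"
  proof (intro ballI)
    fix x y assume xy: "x \<in> V" "y \<in> V"
    then obtain k where k: "k \<in> I" "x \<in> univ (Ms k)" "y \<in> univ (Ms k)" using two VM by blast
    have xk: "x \<in> vset (Ms k) phiV" "y \<in> vset (Ms k) phiV" using eqV[OF k(1)] k xy by auto
    have a1: "add x y = ADD k x y" "ADD k x y \<in> vset (Ms k) phiV" using addE[OF k(1)] xk by auto
    have t: "ths k x \<in> vset (Ms k) phiV" "ths k y \<in> vset (Ms k) phiV" using thV[OF k(1)] xk by auto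
    have "th (add x y) = ths k (ADD k x y)" using a1 thVs k(1) by auto
    also have "\<dots> = ADD k (ths k x) (ths k y)" using thadd[OF k(1)] xk by auto
    also have "\<dots> = add (ths k x) (ths k y)" using addE[OF k(1)] t by auto
    also have "\<dots> = add (th x) (th y)" using thM k by auto
    finally show "th (add x y) = add (th x) (th y)" .
  qed
  have G3: "\<forall>k. \<forall>x\<in>V. th (sm k x) = sm k (th x)"
  proof (intro allI ballI)
    fix k x assume x: "x \<in> V"
    then obtain i where i: "i \<in> I" "x \<in> vset (Ms i) phiV" using inV by blast
    have a1: "sm k x = SM i k x" "SM i k x \<in> vset (Ms i) phiV" using smE[OF i(1)] i by auto
    have t: "ths i x \<in> vset (Ms i) phiV" using thV[OF i(1)] i by auto
    have "th (sm k x) = ths i (SM i k x)" using a1 thVs i(1) by auto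
    also have "\<dots> = SM i k (ths i x)" using thsm[OF i(1)] i by auto
    also have "\<dots> = sm k (ths i x)" using smE[OF i(1)] t by auto
    also have "\<dots> = sm k (th x)" using thVs i by auto
    finally show "th (sm k x) = sm k (th x)" .
  qed
  have G4: "\<forall>x\<in>univ M - V. th x = zero"
  proof
    fix x assume x: "x \<in> univ M - V"
    then obtain i where i: "i \<in> I" "x \<in> univ (Ms i)" using assms(9) by auto
    have "x \<notin> vset (Ms i) phiV" using eqV[OF i(1)] x by auto
    then have "ths i x = ZERO i" using thz[OF i(1)] i by auto
    then show "th x = zero" using thM i zE[OF i(1)] by auto
  qed
  have kerEq: "v \<in> Ker V add sm zero th rho \<longleftrightarrow> v \<in> Ker (vset (Ms i) phiV) (ADD i) (SM i) (ZERO i) (ths i) rho"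
    if i: "i \<in> I" and v: "v \<in> vset (Ms i) phiV" for i v rho
  proof -
    have thr: "\<forall>v\<in>vset (Ms i) phiV. th v = ths i v" using thVs i by auto
    have "polyop add sm zero th rho v = polyop (ADD i) (SM i) (ZERO i) (ths i) rho v"
      using polyop_restrict[OF thV[OF i] thr addE[OF i] smE[OF i] _ zE(2)[OF i] v] zE(1)[OF i] by auto
    moreover have "v \<in> V" using v eqV[OF i] by auto
    ultimately show ?thesis unfolding Ker_def using v zE(1)[OF i] by auto
  qed
  have KV: "Ker V add sm zero th rho \<subseteq> V" for rho unfolding Ker_def by auto
  have G5: "C_endo c d V add sm zero th"
  proof (cases "d = \<infinity>")
    case False
    have "Ker V add sm zero th (MiPo c) = V"
    proof
      show "V \<subseteq> Ker V add sm zero th (MiPo c)"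
      proof
        fix v assume "v \<in> V"
        then obtain i where i: "i \<in> I" "v \<in> vset (Ms i) phiV" using inV by blast
        have "Ker (vset (Ms i) phiV) (ADD i) (SM i) (ZERO i) (ths i) (MiPo c) = vset (Ms i) phiV"
          using CEi[OF i(1)] False unfolding C_endo_def by auto
        then show "v \<in> Ker V add sm zero th (MiPo c)" using kerEq[OF i] i by auto
      qed
    qed (rule KV)
    then show ?thesis unfolding C_endo_def using False by auto
  next
    case True
    have "\<forall>f. monic_irr f \<and> c f \<noteq> \<infinity> \<longrightarrow>
              Ker V add sm zero th (f ^ the_enat (c f)) = Ker V add sm zero th (f ^ (the_enat (c f) + 1))"
    proof (intro allI impI)
      fix f :: "'k poly" assume f: "monic_irr f \<and> c f \<noteq> \<infinity>"
      show "Ker V add sm zero th (f ^ the_enat (c f)) = Ker V add sm zero th (f ^ (the_enat (c f) + 1))"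
      proof (rule set_eqI)
        fix v
        show "v \<in> Ker V add sm zero th (f ^ the_enat (c f)) \<longleftrightarrow> v \<in> Ker V add sm zero th (f ^ (the_enat (c f) + 1))"
        proof (cases "v \<in> V")
          case False then show ?thesis using KV by blast
        next
          case vV: True
          then obtain i where i: "i \<in> I" "v \<in> vset (Ms i) phiV" using inV by blast
          have "Ker (vset (Ms i) phiV) (ADD i) (SM i) (ZERO i) (ths i) (f ^ the_enat (c f)) =
                Ker (vset (Ms i) phiV) (ADD i) (SM i) (ZERO i) (ths i) (f ^ (the_enat (c f) + 1))"
            using CEi[OF i(1)] True f unfolding C_endo_def by auto
          then show ?thesis using kerEq[OF i] by auto
        qed
      qed
    qed
    then show ?thesis unfolding C_endo_def using True by simp
  qed
  show ?thesis unfolding model_TC_def Let_def V_def[symmetric]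
    using modM structM dM G1 G2 G3 G4 G5 by blast
qed

end
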